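(* Consider a finite reward-free MDP with occupancy polytope $\Phi$, let $d_e^\star\in\Phi$ be the occupancy measure of an optimal demonstrator, and let $\mathcal D=\{(d_e^k,\epsilon^k)\}_{k=1}^K$ be a dataset with $d_e^k\in\Phi$, $\epsilon^k\ge0$ and $\mathcal R(\mathcal D)\neq\emptyset$. Then \[ \mathrm{Gap}\big(\mathcal R(\mathcal D),\mathcal R(d_e^\star)\big)\le\min_{(d,\epsilon)\in\mathrm{conv}(\mathcal D)}\big\{\|d-d_e^\star\|_1+\epsilon\big\}, \] where $\mathrm{conv}(\mathcal D)$ is the convex hull of the pairs $(d_e^k,\epsilon^k)$, $k\in[K]$, viewed as points of $\mathbb R^{S\times A}\times\mathbb R$.
   Context: The MDP has finite state set $S$, finite action set $A$, transitions $P(s'\mid s,a)$, initial distribution $\mu_0$, discount $\gamma\in(0,1)$; $M$ is defined by $(Md)(s)=\sum_a d(s,a)-\gamma\sum_{s',a'}P(s\mid s',a')d(s',a')$ and $\Phi=\{d\ge0:Md=(1-\gamma)\mu_0\}$. Rewards are $r\in\Delta(S\times A)$ (probability simplex). $\mathrm{subopt}(r,d):=\max_{\tilde d\in\Phi}r^\top\tilde d-r^\top d$. $\mathcal R(\mathcal D):=\{r\in\Delta(S\times A):\mathrm{subopt}(r,d_e^k)\le\epsilon^k\ \forall k\}$; $\mathcal R(d_e^\star):=\{r\in\Delta(S\times A):\mathrm{subopt}(r,d_e^\star)=0\}$. For a set of rewards $\mathcal R$, $\mathrm{Gap}(\mathcal R,\mathcal R(d_e^\star)):=\max_{r\in\mathcal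 R}\mathrm{subopt}(r,d_e^\star)$. *)

theory Defs
  imports "HOL-Analysis.Analysis"
begin

text \<open>Occupancy measures and rewards are vectors in R^(S x A), modelled as
  real ^ ('s \<times> 'a) with finite state type 's and action type 'a.
  Transition kernel: P s a s' = P(s' | s, a).\<close>

definition Mop :: "('s::finite \<Rightarrow> 'a::finite \<Rightarrow> 's \<Rightarrow> real) \<Rightarrow> real \<Rightarrow> real ^ ('s \<times> 'a) \<Rightarrow> 's \<Rightarrow> real" where
  "Mop P \<gamma> d s = (\<Sum>a\<in>UNIV. d $ (s, a)) - \<gamma> * (\<Sum>(s', a')\<in>UNIV. P s' a' s * d $ (s', a'))"

definition Phi :: "('s::finite \<Rightarrow> 'a::finite \<Rightarrow> 's \<Rightarrow> real) \<Rightarrow> ('s \<Rightarrow> real) \<Rightarrow> real \<Rightarrow> (real ^ ('s \<times> 'a)) set" where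
  "Phi P \<mu>0 \<gamma> = {d. (\<forall>x. 0 \<le> d $ x) \<and> (\<forall>s. Mop P \<gamma> d s = (1 - \<gamma>) * \<mu>0 s)}"

definition reward_simplex :: "(real ^ ('n::finite)) set" where
  "reward_simplex = {r. (\<forall>x. 0 \<le> r $ x) \<and> (\<Sum>x\<in>UNIV. r $ x) = 1}"

definition subopt :: "('s::finite \<Rightarrow> 'a::finite \<Rightarrow> 's \<Rightarrow> real) \<Rightarrow> ('s \<Rightarrow> real) \<Rightarrow> real \<Rightarrow> real ^ ('s \<times> 'a) \<Rightarrow> real ^ ('s \<times> 'a) \<Rightarrow> real" where
  "subopt P \<mu>0 \<gamma> r d = (SUP d'\<in>Phi P \<mu>0 \<gamma>. r \<bullet> d') - r \<bullet> d"

definition RD :: "('s::finite \<Rightarrow> 'a::finite \<Rightarrow> 's \<Rightarrow> real) \<Rightarrow> ('s \<Rightarrow> real) \<Rightarrow> real \<Rightarrow> nat \<Rightarrow> (nat \<Rightarrow> real ^ ('s \<times> 'a)) \<Rightarrow> (nat \<Rightarrow> real) \<Rightarrow> (real ^ ('s \<times> 'a)) set" where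
  "RD P \<mu>0 \<gamma> K dk eps = {r \<in> reward_simplex. \<forall>k<K. subopt P \<mu>0 \<gamma> r (dk k) \<le> eps k}"

definition Gap :: "('s::finite \<Rightarrow> 'a::finite \<Rightarrow> 's \<Rightarrow> real) \<Rightarrow> ('s \<Rightarrow> real) \<Rightarrow> real \<Rightarrow> (real ^ ('s \<times> 'a)) set \<Rightarrow> real ^ ('s \<times> 'a) \<Rightarrow> real" where
  "Gap P \<mu>0 \<gamma> R dstar = (SUP r\<in>R. subopt P \<mu>0 \<gamma> r dstar)"

definition l1dist :: "real ^ ('n::finite) \<Rightarrow> real ^ 'n \<Rightarrow> real" where
  "l1dist d e = (\<Sum>x\<in>UNIV. \<bar>d $ x - e $ x\<bar>)"

end

theory Submission
  imports Defs
begin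

theorem mainTheorem2:
  fixes P :: "'s::finite \<Rightarrow> 'a::finite \<Rightarrow> 's \<Rightarrow> real"
    and \<mu>0 :: "'s \<Rightarrow> real" and \<gamma> :: real
    and dstar :: "real ^ ('s \<times> 'a)"
    and K :: nat and dk :: "nat \<Rightarrow> real ^ ('s \<times> 'a)" and eps :: "nat \<Rightarrow> real"
  assumes P_nonneg: "\<forall>s a s'. 0 \<le> P s a s'"
    and P_sum: "\<forall>s a. (\<Sum>s'\<in>UNIV. P s a s') = 1"
    and mu_nonneg: "\<forall>s. 0 \<le> \<mu>0 s"
    and mu_sum: "(\<Sum>s\<in>UNIV. \<mu>0 s) = 1"
    and gamma: "0 < \<gamma>" "\<gamma> < 1"
    and K_pos: "0 < K"
    and dstar_Phi: "dstar \<in> Phi P \<mu>0 \<gamma>"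
    and dk_Phi: "\<forall>k<K. dk k \<in> Phi P \<mu>0 \<gamma>"
    and eps_nonneg: "\<forall>k<K. 0 \<le> eps k"
    and RD_ne: "RD P \<mu>0 \<gamma> K dk eps \<noteq> {}"
  shows "Gap P \<mu>0 \<gamma> (RD P \<mu>0 \<gamma> K dk eps) dstar
           \<le> (INF p\<in>convex hull ((\<lambda>k. (dk k, eps k)) ` {..<K}). l1dist (fst p) dstar + snd p)"
proof -
  let ?H = "convex hull ((\<lambda>k. (dk k, eps k)) ` {..<K})"
  have Hne: "?H \<noteq> {}" using K_pos by auto
  have key: "subopt P \<mu>0 \<gamma> r dstar \<le> l1dist (fst p) dstar + snd p"
    if r: "r \<in> RD P \<mu>0 \<gamma> K dk eps" and p: "p \<in> ?H" for r p
  proof -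
    define V where "V = (SUP d'\<in>Phi P \<mu>0 \<gamma>. r \<bullet> d')"
    have sub: "\<And>d. subopt P \<mu>0 \<gamma> r d = V - r \<bullet> d" by (simp add: subopt_def V_def)
    let ?C = "{q :: (real ^ ('s \<times> 'a)) \<times> real. V - r \<bullet> fst q \<le> snd q}"
    have cC: "convex ?C"
      unfolding convex_def
    proof (intro ballI allI impI)
      fix x y :: "(real ^ ('s \<times> 'a)) \<times> real" and u v :: real
      assume x: "x \<in> ?C" and y: "y \<in> ?C" and uv: "0 \<le> u" "0 \<le> v" "u + v = 1"
      have "V - r \<bullet> fst (u *\<^sub>R x + v *\<^sub>R y) = u * (V - r \<bullet> fst x) + v * (V - r \<bullet> fst y)"
        using uv(3) by (simp add: inner_add_right algebra_simps)
        (metis add.commute distrib_left mult.right_neutral)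
      also have "\<dots> \<le> u * snd x + v * snd y"
        using x y uv by (intro add_mono mult_left_mono) auto
      finally show "u *\<^sub>R x + v *\<^sub>R y \<in> ?C" by simp
    qed
    have gen: "(\<lambda>k. (dk k, eps k)) ` {..<K} \<subseteq> ?C"
      using r by (auto simp: RD_def sub)
    have "p \<in> ?C" using hull_minimal[of _ _ convex, OF gen cC] p by blast
    hence h1: "V - r \<bullet> fst p \<le> snd p" by simp
    have rs: "r \<in> reward_simplex" using r by (simp add: RD_def)
    have r01: "0 \<le> r $ x \<and> r $ x \<le> 1" for x
    proof -
      have nn: "\<forall>x. 0 \<le> r $ x" and s1: "(\<Sum>x\<in>UNIV. r $ x) = 1"
        using rs by (auto simp: reward_simplex_def)
      have "r $ x \<le> (\<Sum>x\<in>UNIV. r $ x)"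
        by (rule member_le_sum) (use nn in auto)
      thus ?thesis using nn s1 by (metis order_refl)
    qed
    have "r \<bullet> fst p - r \<bullet> dstar = (\<Sum>x\<in>UNIV. r $ x * (fst p $ x - dstar $ x))"
      by (simp add: inner_vec_def sum_subtractf right_diff_distrib)
    also have "\<dots> \<le> (\<Sum>x\<in>UNIV. \<bar>fst p $ x - dstar $ x\<bar>)"
    proof (rule sum_mono)
      fix x
      have "r $ x * (fst p $ x - dstar $ x) \<le> \<bar>r $ x * (fst p $ x - dstar $ x)\<bar>" by simp
      also have "\<dots> = r $ x * \<bar>fst p $ x - dstar $ x\<bar>" using r01[of x] by (simp add: abs_mult)
      also have "\<dots> \<le> 1 * \<bar>fst p $ x - dstar $ x\<bar>" using r01[of x] by (intro mult_right_mono) auto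
      finally show "r $ x * (fst p $ x - dstar $ x) \<le> \<bar>fst p $ x - dstar $ x\<bar>" by simp
    qed
    finally have "r \<bullet> fst p - r \<bullet> dstar \<le> l1dist (fst p) dstar" by (simp add: l1dist_def)
    thus ?thesis using h1 by (simp add: sub)
  qed
  show ?thesis
    unfolding Gap_def
    by (rule cSUP_least[OF RD_ne], rule cINF_greatest[OF Hne], rule key)
qed

end
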